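(* Consider the Latex Particles Morphology Formation population balance system described in the context, with $a \in \mathbb{R}$, $0<b<1$ and $v_0=\lambda_{\mathrm{c}}>0$, and let $m,w$ be its solutions. Then the moments $M^0(t):=\int_0^\infty m(v,t)\,dv$ and $W^0(t):=\int_0^\infty w(v,t)\,dv$ are finite for all $t\in\mathbb{R}^+$, and $M^0(t)\le \lambda_{\mathrm{n}}\, t$ and $W^0(t)\le \frac{\lambda_{\mathrm{n}}\lambda_{\mathrm{m}}}{2}\,t^2$ for all $t\in\mathbb{R}^+$.
   Context: Fix real constants $a,b$ and positive constants $\lambda_{\mathrm{a}},\lambda_{\mathrm{c}},\lambda_{\mathrm{d}},\lambda_{\mathrm{m}},\lambda_{\mathrm{n}},\lambda_{\mathrm{p}},\lambda_{\mathrm{pol1}}$, $\bar\Psi>0$, $\Psi_r>0$, $\Phi_s\in(0,1)$. Set $v_0:=\lambda_{\mathrm{c}}$ and $\mu:=\lambda_{\mathrm{m}}$. The unknowns are densities $m(v,t), w(v,t)$ ($v,t\ge 0$) and scalar functions $V^{\mathrm{mat}}(t),V^{\mathrm{c_m}}(t),V^{\mathrm{c_w}}(t),\Psi(t),V_{\mathrm{pol2}}(t)$. Define $\alpha(v,u,t):=\tilde\alpha_0(t)[v^a+u^a]$, $\tilde\alpha_0(t):=\lambda_{\mathrm{a}}(\Psi(t)+1)^{14/3}$; $g(v,t):=\tilde\varrho_{\mathrm{d}}(t)v^b+\tilde\varrho_{\mathrm{p}}(t)v$, $\tilde\varrho_{\mathrm{p}}(t):=\lambda_{\mathrm{p}}\Psi(t)/V_p(t)$,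 $\tilde\varrho_{\mathrm{d}}(t):=\lambda_{\mathrm{d}}\Phi(t)(\Psi(t)+1)^{2/3}$; $n(v,t):=\tilde\eta_0(t)\delta(v-v_0)$ with $\tilde\eta_0(t):=\lambda_{\mathrm{n}}\Phi(t)$ and $\delta$ the Dirac delta; $\Phi(t):=\max\{V^{\mathrm{mat}}(t)/[(\Psi(t)+1)(V^{\mathrm{mat}}(t)+\lambda_{\mathrm{pol1}})]-\Phi_s,0\}$; $V_p(t):=(\Psi(t)+1)[V^{\mathrm{mat}}(t)+V^{\mathrm{c_m}}(t)+V^{\mathrm{c_w}}(t)+\lambda_{\mathrm{pol1}}]$; $\Sigma_y(t):=(\Psi(t)+1)^{2/3}\int_0^\infty v^b y(v,t)\,dv$ for $y=m,w$. The system is: for all $v,t>0$, $\partial_t m=-\partial_v(g m)+n-\mu m-m(v,t)\int_0^\infty\alpha(v,u,t)m(u,t)\,du+\tfrac12\int_0^v\alpha(v-u,u,t)m(v-u,t)m(u,t)\,du$, $\partial_t w=-\partial_v(g w)+\mu m-w(v,t)\int_0^\infty\alpha(v,u,t)w(u,t)\,du+\tfrac12\int_0^v\alpha(v-u,u,t)w(v-u,t)w(u,t)\,du$, with $m(v,0)=w(v,0)=0$, $m(0,t)=w(0,t)=0$; coupled to the ODEs $\dot V^{\mathrm{mat}}=\lambda_{\mathrm{p}}\frac{\Psi}{V_p}(V^{\mathrm{mat}}+\lambda_{\mathrm{pol1}})-\Phi[\lambda_{\mathrm{c}}\lambda_{\mathrm{n}}+\lambda_{\mathrm{d}}\Sigma_m+\lambda_{\mathrm{d}}\Sigma_w]$,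 $\dot V^{\mathrm{c_m}}=\lambda_{\mathrm{p}}\frac{\Psi}{V_p}V^{\mathrm{c_m}}+\Phi[\lambda_{\mathrm{c}}\lambda_{\mathrm{n}}+\lambda_{\mathrm{d}}\Sigma_m]-\lambda_{\mathrm{m}}V^{\mathrm{c_m}}$, $\dot V^{\mathrm{c_w}}=\lambda_{\mathrm{p}}\frac{\Psi}{V_p}V^{\mathrm{c_w}}+\lambda_{\mathrm{d}}\Phi\Sigma_w+\lambda_{\mathrm{m}}V^{\mathrm{c_m}}$, $\dot\Psi=-\lambda_{\mathrm{p}}\frac{\Psi}{\Psi+1}\frac{\Psi+\Psi_r}{V_{\mathrm{pol2}}+\lambda_{\mathrm{pol1}}}$, $\dot V_{\mathrm{pol2}}=\lambda_{\mathrm{p}}\frac{\Psi}{\Psi+1}$, with $V^{\mathrm{mat}}(0)=V^{\mathrm{c_m}}(0)=V^{\mathrm{c_w}}(0)=V_{\mathrm{pol2}}(0)=0$, $\Psi(0)=\bar\Psi$. Solutions $m,w$ are understood to be non-negative functions. The constant $\lambda_{\mathrm{n}}$ is the upper bound of $\tilde\eta_0(t)$ (denoted $\kappa_{\mathrm{n}}$ in the paper). *)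

theory Defs
  imports "HOL-Analysis.Analysis"
begin

record lpmf_params =
  pa :: real
  pb :: real
  la :: real
  lc :: real        (* lambda_c = v_0 *)
  ld :: real
  lm :: real
  ln :: real
  lp :: real
  lpol1 :: real
  Psibar :: real
  Psir :: real
  Phis :: real

type_synonym density = "real \<Rightarrow> real \<Rightarrow> real"   (* y v t *)

definition Phi_f :: "lpmf_params \<Rightarrow> (real \<Rightarrow> real) \<Rightarrow> (real \<Rightarrow> real) \<Rightarrow> real \<Rightarrow> real" where
  "Phi_f P Vmat Psi t =
     max (Vmat t / ((Psi t + 1) * (Vmat t + lpol1 P)) - Phis P) 0"

definition Vp_f :: "lpmf_params \<Rightarrow> (real \<Rightarrow> real) \<Rightarrow> (real \<Rightarrow> real) \<Rightarrow> (real \<Rightarrow> real)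
    \<Rightarrow> (real \<Rightarrow> real) \<Rightarrow> real \<Rightarrow> real" where
  "Vp_f P Vmat Vcm Vcw Psi t = (Psi t + 1) * (Vmat t + Vcm t + Vcw t + lpol1 P)"

definition alpha_f :: "lpmf_params \<Rightarrow> (real \<Rightarrow> real) \<Rightarrow> real \<Rightarrow> real \<Rightarrow> real \<Rightarrow> real" where
  "alpha_f P Psi v u t = la P * (Psi t + 1) powr (14/3) * (v powr pa P + u powr pa P)"

definition g_f :: "lpmf_params \<Rightarrow> (real \<Rightarrow> real) \<Rightarrow> (real \<Rightarrow> real) \<Rightarrow> (real \<Rightarrow> real)
    \<Rightarrow> (real \<Rightarrow> real) \<Rightarrow> real \<Rightarrow> real \<Rightarrow> real" where
  "g_f P Vmat Vcm Vcw Psi v t =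
     ld P * Phi_f P Vmat Psi t * (Psi t + 1) powr (2/3) * v powr pb P
     + lp P * Psi t / Vp_f P Vmat Vcm Vcw Psi t * v"

definition eta0_f :: "lpmf_params \<Rightarrow> (real \<Rightarrow> real) \<Rightarrow> (real \<Rightarrow> real) \<Rightarrow> real \<Rightarrow> real" where
  "eta0_f P Vmat Psi t = ln P * Phi_f P Vmat Psi t"

definition Sigma_f :: "lpmf_params \<Rightarrow> (real \<Rightarrow> real) \<Rightarrow> density \<Rightarrow> real \<Rightarrow> real" where
  "Sigma_f P Psi y t =
     (Psi t + 1) powr (2/3) * set_lebesgue_integral lborel {0<..} (\<lambda>v. v powr pb P * y v t)"

definition test_fun :: "(real \<Rightarrow> real) \<Rightarrow> bool" where
  "test_fun \<phi> \<longleftrightarrow> (\<forall>v. (\<phi> has_real_derivative deriv \<phi> v) (at v))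
      \<and> continuous_on UNIV (deriv \<phi>) \<and> (\<exists>R. \<forall>v\<ge>R. \<phi> v = 0)"

definition coag_weak :: "lpmf_params \<Rightarrow> (real \<Rightarrow> real) \<Rightarrow> density \<Rightarrow> (real \<Rightarrow> real) \<Rightarrow> real \<Rightarrow> real" where
  "coag_weak P Psi y \<phi> t =
     - set_lebesgue_integral (lborel \<Otimes>\<^sub>M lborel) ({0<..} \<times> {0<..})
         (\<lambda>(v,u). alpha_f P Psi v u t * y v t * y u t * \<phi> v)
     + 1/2 * set_lebesgue_integral (lborel \<Otimes>\<^sub>M lborel) ({0<..} \<times> {0<..})
         (\<lambda>(v,u). alpha_f P Psi v u t * y v t * y u t * \<phi> (v + u))"

definition admissible_density :: "lpmf_params \<Rightarrow> (real \<Rightarrow> real) \<Rightarrow> density \<Rightarrow> bool" where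
  "admissible_density P Psi y \<longleftrightarrow>
     (\<forall>v t. 0 \<le> v \<longrightarrow> 0 \<le> t \<longrightarrow> 0 \<le> y v t)
   \<and> (\<forall>v\<ge>0. y v 0 = 0) \<and> (\<forall>t\<ge>0. y 0 t = 0)
   \<and> (\<forall>t\<ge>0. \<forall>R>0. set_integrable lborel {0<..R} (\<lambda>v. y v t))
   \<and> (\<forall>t\<ge>0. set_integrable lborel {0<..} (\<lambda>v. v powr pb P * y v t))
   \<and> (\<forall>t\<ge>0. \<forall>R>0. set_integrable (lborel \<Otimes>\<^sub>M lborel) ({0<..R} \<times> {0<..})
          (\<lambda>(v,u). alpha_f P Psi v u t * y v t * y u t))"

text \<open>Solution of the LPMF system: the two population balance equations hold in the
  weak sense (tested against test functions; the Dirac source n = eta0 delta(v - v0)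
  contributes eta0(t) phi(v0)), and the ODEs hold classically on t >= 0.\<close>
definition lpmf_solution :: "lpmf_params \<Rightarrow> density \<Rightarrow> density \<Rightarrow> (real \<Rightarrow> real) \<Rightarrow> (real \<Rightarrow> real)
    \<Rightarrow> (real \<Rightarrow> real) \<Rightarrow> (real \<Rightarrow> real) \<Rightarrow> (real \<Rightarrow> real) \<Rightarrow> bool" where
  "lpmf_solution P m w Vmat Vcm Vcw Psi Vpol2 \<longleftrightarrow>
     admissible_density P Psi m \<and> admissible_density P Psi w
   \<and> (\<forall>\<phi>. test_fun \<phi> \<longrightarrow> (\<forall>t\<ge>0.
        ((\<lambda>s. set_lebesgue_integral lborel {0<..} (\<lambda>v. \<phi> v * m v s)) has_real_derivative
           (set_lebesgue_integral lborel {0<..}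
               (\<lambda>v. g_f P Vmat Vcm Vcw Psi v t * deriv \<phi> v * m v t)
            + eta0_f P Vmat Psi t * \<phi> (lc P)
            - lm P * set_lebesgue_integral lborel {0<..} (\<lambda>v. \<phi> v * m v t)
            + coag_weak P Psi m \<phi> t)) (at t within {0..})))
   \<and> (\<forall>\<phi>. test_fun \<phi> \<longrightarrow> (\<forall>t\<ge>0.
        ((\<lambda>s. set_lebesgue_integral lborel {0<..} (\<lambda>v. \<phi> v * w v s)) has_real_derivative
           (set_lebesgue_integral lborel {0<..}
               (\<lambda>v. g_f P Vmat Vcm Vcw Psi v t * deriv \<phi> v * w v t)
            + lm P * set_lebesgue_integral lborel {0<..} (\<lambda>v. \<phi> v * m v t)
            + coag_weak P Psi w \<phi> t)) (at t within {0..})))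
   \<and> (\<forall>t\<ge>0. (Vmat has_real_derivative
          (lp P * Psi t / Vp_f P Vmat Vcm Vcw Psi t * (Vmat t + lpol1 P)
           - Phi_f P Vmat Psi t * (lc P * ln P + ld P * Sigma_f P Psi m t
                                   + ld P * Sigma_f P Psi w t))) (at t within {0..}))
   \<and> (\<forall>t\<ge>0. (Vcm has_real_derivative
          (lp P * Psi t / Vp_f P Vmat Vcm Vcw Psi t * Vcm t
           + Phi_f P Vmat Psi t * (lc P * ln P + ld P * Sigma_f P Psi m t)
           - lm P * Vcm t)) (at t within {0..}))
   \<and> (\<forall>t\<ge>0. (Vcw has_real_derivative
          (lp P * Psi t / Vp_f P Vmat Vcm Vcw Psi t * Vcw t
           + ld P * Phi_f P Vmat Psi t * Sigma_f P Psi w t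
           + lm P * Vcm t)) (at t within {0..}))
   \<and> (\<forall>t\<ge>0. (Psi has_real_derivative
          (- lp P * (Psi t / (Psi t + 1)) * ((Psi t + Psir P) / (Vpol2 t + lpol1 P))))
          (at t within {0..}))
   \<and> (\<forall>t\<ge>0. (Vpol2 has_real_derivative (lp P * (Psi t / (Psi t + 1)))) (at t within {0..}))
   \<and> Vmat 0 = 0 \<and> Vcm 0 = 0 \<and> Vcw 0 = 0 \<and> Vpol2 0 = 0 \<and> Psi 0 = Psibar P"

definition lpmf_constants_ok :: "lpmf_params \<Rightarrow> bool" where
  "lpmf_constants_ok P \<longleftrightarrow> 0 < pb P \<and> pb P < 1
     \<and> 0 < la P \<and> 0 < lc P \<and> 0 < ld P \<and> 0 < lm P \<and> 0 < ln P \<and> 0 < lp P \<and> 0 < lpol1 P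
     \<and> 0 < Psibar P \<and> 0 < Psir P \<and> 0 < Phis P \<and> Phis P < 1"

end

theory Submission
  imports Defs
begin


definition qsq :: "real \<Rightarrow> real" where "qsq x = (if x \<le> 0 then 0 else x^2)"

lemma qsq_deriv: "(qsq has_real_derivative (2 * max 0 x)) (at x)"
proof -
  have "((\<lambda>x. if x \<in> {..0} then (\<lambda>_. 0::real) x else (\<lambda>x. x^2) x) has_derivative
      (if x \<in> {..0} then (\<lambda>x h. 0) x else (\<lambda>x h. 2*x*h) x)) (at x within ({..0} \<union> {0<..}))"
    apply (rule has_derivative_If_within_closures)
    apply (auto intro!: derivative_eq_intros)
    done
  moreover have "{..0} \<union> {0<..} = (UNIV::real set)" by auto
  moreover have "(\<lambda>x. if x \<in> {..0} then (\<lambda>_. 0::real) x else (\<lambda>x. x^2) x) = qsq"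
    by (auto simp: qsq_def)
  ultimately have "(qsq has_derivative (if x \<in> {..0} then (\<lambda>h. 0) else (\<lambda>h. 2*x*h))) (at x)"
    by simp
  then show ?thesis
    unfolding has_field_derivative_def
    by (rule has_derivative_eq_rhs) (auto simp: fun_eq_iff max_def)
qed

definition cut :: "real \<Rightarrow> real \<Rightarrow> real" where
  "cut R v = 1 - 2* qsq(v-R) + 4* qsq(v-R-1/2) - 2* qsq(v-R-1)"
definition dcut :: "real \<Rightarrow> real \<Rightarrow> real" where
  "dcut R v = -4*max 0 (v-R) + 8*max 0 (v-R-1/2) - 4*max 0 (v-R-1)"

lemma qsq_shift: "((\<lambda>z. qsq (z - c)) has_real_derivative 2 * max 0 (v - c)) (at v)"
proof -
  have "((\<lambda>z. z - c) has_real_derivative 1) (at v)" by (auto intro!: derivative_eq_intros)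
  from DERIV_chain2[OF qsq_deriv this] show ?thesis by simp
qed

lemma cut_deriv: "(cut R has_real_derivative dcut R v) (at v)"
proof -
  have e: "cut R = (\<lambda>v. 1 - 2* qsq(v-R) + 4* qsq(v-(R+1/2)) - 2* qsq(v-(R+1)))"
    by (auto simp: cut_def fun_eq_iff algebra_simps)
  have "((\<lambda>v. 1 - 2* qsq(v-R) + 4* qsq(v-(R+1/2)) - 2* qsq(v-(R+1))) has_real_derivative
     (0 - 2*(2*max 0 (v-R)) + 4*(2*max 0 (v-(R+1/2))) - 2*(2*max 0 (v-(R+1))))) (at v)"
    by (intro DERIV_diff DERIV_add DERIV_cmult qsq_shift DERIV_const)
  then show ?thesis unfolding e dcut_def by (simp add: algebra_simps)
qed

lemma deriv_cut: "deriv (cut R) = dcut R"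
  using cut_deriv DERIV_imp_deriv by blast

lemma test_fun_cut: "test_fun (cut R)"
  unfolding test_fun_def deriv_cut
proof (intro conjI allI)
  show "\<And>v. (cut R has_real_derivative dcut R v) (at v)" by (rule cut_deriv)
  show "continuous_on UNIV (dcut R)" unfolding dcut_def[abs_def] by (intro continuous_intros)
  show "\<exists>Ra. \<forall>v\<ge>Ra. cut R v = 0"
    by (rule exI[of _ "R+1"]) (auto simp: cut_def qsq_def power2_eq_square algebra_simps)
qed

lemma dcut_nonpos: "dcut R v \<le> 0"
  unfolding dcut_def by (auto simp: max_def)

lemma cut_antimono: "v \<le> u \<Longrightarrow> cut R u \<le> cut R v"
  by (rule DERIV_nonpos_imp_nonincreasing[of v u "cut R"])
     (auto intro: cut_deriv dcut_nonpos)

lemma cut_one: "v \<le> R \<Longrightarrow> cut R v = 1"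
  by (auto simp: cut_def qsq_def)

lemma cut_zero: "v \<ge> R + 1 \<Longrightarrow> cut R v = 0"
  by (auto simp: cut_def qsq_def power2_eq_square algebra_simps)

lemma cut_le1: "cut R v \<le> 1"
proof (cases "v \<le> R")
  case False then show ?thesis using cut_antimono[of R v R] cut_one[of R R] by auto
qed (simp add: cut_one)

lemma cut_ge0: "0 \<le> cut R v"
proof (cases "v \<ge> R+1")
  case False
  have "cut R (R+1) = 0" by (rule cut_zero) simp
  moreover have "cut R (R+1) \<le> cut R v" using False by (intro cut_antimono) simp
  ultimately show ?thesis by simp
qed (simp add: cut_zero)



lemma deriv_within_to_at:
  assumes "(f has_real_derivative D) (at t within {0..})" "0 < t"
  shows "(f has_real_derivative D) (at t)"
proof -
  have "t \<in> interior {0::real..}" using assms(2) by simp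
  then have "at t within {0..} = at t" by (rule at_within_interior)
  with assms(1) show ?thesis by simp
qed

lemma cont_from_deriv:
  assumes "\<forall>t\<ge>0. (f has_real_derivative f' t) (at t within {0..})"
  shows "continuous_on {0..} f"
proof -
  have "\<And>t. t \<in> {0..} \<Longrightarrow> continuous (at t within {0..}) f"
    using assms DERIV_continuous by (metis atLeast_iff)
  then show ?thesis using continuous_on_eq_continuous_within by blast
qed

lemma mono_from_deriv:
  assumes "\<forall>t\<ge>0. (f has_real_derivative f' t) (at t within {0..})"
    and "0 \<le> a" "a \<le> b" "\<And>t. a < t \<Longrightarrow> t < b \<Longrightarrow> f' t \<ge> 0"
  shows "f a \<le> f b"
proof (rule DERIV_nonneg_imp_increasing_open[OF assms(3)])
  fix x assume "a < x" "x < b"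
  then show "\<exists>y. DERIV f x :> y \<and> 0 \<le> y"
    using assms deriv_within_to_at[of f "f' x" x] by (intro exI[of _ "f' x"]) auto
next
  show "continuous_on {a..b} f"
    using cont_from_deriv[OF assms(1)] assms(2) by (auto intro: continuous_on_subset)
qed

lemma antimono_from_deriv:
  assumes "\<forall>t\<ge>0. (f has_real_derivative f' t) (at t within {0..})"
    and "0 \<le> a" "a \<le> b" "\<And>t. a < t \<Longrightarrow> t < b \<Longrightarrow> f' t \<le> 0"
  shows "f b \<le> f a"
proof -
  have "\<forall>t\<ge>0. ((\<lambda>s. - f s) has_real_derivative - f' t) (at t within {0..})"
    using assms(1) by (auto intro: derivative_intros)
  from mono_from_deriv[OF this assms(2,3)] assms(4) show ?thesis by force
qed

lemma stay_nonneg: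
  fixes f :: "real \<Rightarrow> real"
  assumes der: "\<forall>t\<ge>0. (f has_real_derivative f' t) (at t within {0..})"
    and c: "c > 0" and f0: "f 0 \<ge> 0"
    and pos: "\<And>t. t > 0 \<Longrightarrow> -c < f t \<Longrightarrow> f t < 0 \<Longrightarrow> f' t \<ge> 0"
  shows "\<forall>t\<ge>0. f t \<ge> 0"
proof (rule ccontr)
  assume "\<not> (\<forall>t\<ge>0. f t \<ge> 0)"
  then obtain T where T: "T \<ge> 0" "f T < 0" by force
  define d where "d = max (f T) (-c/2)"
  have d: "d < 0" "-c < d" using T c by (auto simp: d_def)
  have cont: "continuous_on {0..} f" by (rule cont_from_deriv[OF der])
  define Z where "Z = {0..T} \<inter> f -` {..d}"
  have Zc: "closed Z" unfolding Z_def
    by (rule continuous_closed_preimage) (auto intro: continuous_on_subset[OF cont])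
  have TZ: "T \<in> Z" using T by (auto simp: Z_def d_def)
  have bdd: "bdd_below Z" by (auto simp: Z_def bdd_below_def)
  define t1 where "t1 = Inf Z"
  have t1Z: "t1 \<in> Z" unfolding t1_def using Zc TZ bdd closed_contains_Inf by blast
  have t1: "0 \<le> t1" "t1 \<le> T" "f t1 \<le> d" using t1Z by (auto simp: Z_def)
  have below: "f s > d" if "0 \<le> s" "s < t1" for s
  proof (rule ccontr)
    assume "\<not> f s > d"
    then have "s \<in> Z" using that t1 by (auto simp: Z_def)
    then have "t1 \<le> s" unfolding t1_def using bdd by (rule cInf_lower)
    with that show False by simp
  qed
  define Z0 where "Z0 = {0..t1} \<inter> f -` {0..}"
  have Z0c: "closed Z0" unfolding Z0_def
    by (rule continuous_closed_preimage) (auto intro: continuous_on_subset[OF cont])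
  have 0: "0 \<in> Z0" using f0 t1 by (auto simp: Z0_def)
  have bdd0: "bdd_above Z0" by (auto simp: Z0_def bdd_above_def)
  define t0 where "t0 = Sup Z0"
  have t0Z: "t0 \<in> Z0" unfolding t0_def using Z0c 0 bdd0 closed_contains_Sup by blast
  have t0: "0 \<le> t0" "t0 \<le> t1" "f t0 \<ge> 0" using t0Z by (auto simp: Z0_def)
  have above: "f s < 0" if "t0 < s" "s \<le> t1" for s
  proof (rule ccontr)
    assume "\<not> f s < 0"
    then have "s \<in> Z0" using that t0 by (auto simp: Z0_def)
    then have "s \<le> t0" unfolding t0_def using bdd0 by (rule cSup_upper)
    with that show False by simp
  qed
  have "f t0 \<le> f t1"
  proof (rule mono_from_deriv[OF der t0(1,2)])
    fix t assume "t0 < t" "t < t1"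
    then show "f' t \<ge> 0" using pos[of t] below[of t] above[of t] t0 d by auto
  qed
  with t0 t1 d show False by simp
qed

lemma psi_pos:
  fixes Psi V :: "real \<Rightarrow> real"
  assumes dPsi: "\<forall>t\<ge>0. (Psi has_real_derivative
          (- kp * (Psi t / (Psi t + 1)) * ((Psi t + r) / (V t + l)))) (at t within {0..})"
    and dV: "\<forall>t\<ge>0. (V has_real_derivative (kp * (Psi t / (Psi t + 1)))) (at t within {0..})"
    and kp: "kp > 0" and r: "r > 0" and l: "l > 0" and P0: "Psi 0 > 0" and V0: "V 0 = 0"
  shows "\<forall>t\<ge>0. Psi t > 0"
proof (rule ccontr)
  assume "\<not> (\<forall>t\<ge>0. Psi t > 0)"
  then obtain T where T: "T \<ge> 0" "Psi T \<le> 0" by force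
  have cont: "continuous_on {0..} Psi" by (rule cont_from_deriv[OF dPsi])
  define Z where "Z = {0..T} \<inter> Psi -` {..0}"
  have Zc: "closed Z" unfolding Z_def
    by (rule continuous_closed_preimage) (auto intro: continuous_on_subset[OF cont])
  have TZ: "T \<in> Z" using T by (auto simp: Z_def)
  have bdd: "bdd_below Z" by (auto simp: Z_def bdd_below_def)
  define t1 where "t1 = Inf Z"
  have t1Z: "t1 \<in> Z" unfolding t1_def using Zc TZ bdd closed_contains_Inf by blast
  have t1: "0 \<le> t1" "t1 \<le> T" "Psi t1 \<le> 0" using t1Z by (auto simp: Z_def)
  have below: "Psi s > 0" if "0 \<le> s" "s < t1" for s
  proof (rule ccontr)
    assume "\<not> Psi s > 0"
    then have "s \<in> Z" using that t1 by (auto simp: Z_def)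
    then have "t1 \<le> s" unfolding t1_def using bdd by (rule cInf_lower)
    with that show False by simp
  qed
  have Vnn: "V s \<ge> 0" if "0 \<le> s" "s < t1" for s
  proof -
    have "V 0 \<le> V s"
    proof (rule mono_from_deriv[OF dV _ that(1)])
      fix t assume "0 < t" "t < s"
      then have "Psi t > 0" using below that by auto
      then show "kp * (Psi t / (Psi t + 1)) \<ge> 0" using kp by simp
    qed simp
    with V0 show ?thesis by simp
  qed
  have Ple: "Psi s \<le> Psi 0" if "0 \<le> s" "s < t1" for s
  proof (rule antimono_from_deriv[OF dPsi _ that(1)])
    fix t assume "0 < t" "t < s"
    then have "Psi t > 0" "V t \<ge> 0" using below Vnn that by auto
    then show "- kp * (Psi t / (Psi t + 1)) * ((Psi t + r) / (V t + l)) \<le> 0"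
      using kp r l by (intro mult_nonpos_nonneg) auto
  qed simp
  define K where "K = kp * (Psi 0 + r) / l"
  define q where "q t = Psi t * exp (K * t)" for t
  define q' where "q' t = (- kp * (Psi t / (Psi t + 1)) * ((Psi t + r) / (V t + l))) * exp (K * t)
      + Psi t * (exp (K * t) * K)" for t
  have dq: "\<forall>t\<ge>0. (q has_real_derivative q' t) (at t within {0..})"
    unfolding q_def[abs_def] q'_def using dPsi
    by (auto intro!: derivative_eq_intros)
  have "q 0 \<le> q t1"
  proof (rule mono_from_deriv[OF dq _ t1(1)])
    fix t assume tt: "0 < t" "t < t1"
    have P: "Psi t > 0" "Psi t \<le> Psi 0" "V t \<ge> 0" using below Ple Vnn tt by auto
    have k: "kp * ((Psi t + r) / ((Psi t + 1) * (V t + l))) \<le> K"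
    proof -
      have "(Psi t + r) / ((Psi t + 1) * (V t + l)) \<le> (Psi 0 + r) / l"
      proof (rule frac_le)
        show "(Psi t + 1) * (V t + l) \<ge> l"
        proof -
          have "(Psi t + 1) * (V t + l) \<ge> 1 * (V t + l)"
            using P l by (intro mult_right_mono) auto
          then show ?thesis using P by simp
        qed
      qed (use P r l in auto)
      then show ?thesis unfolding K_def using kp
        by (simp add: mult_left_mono divide_right_mono times_divide_eq_right[symmetric] del: times_divide_eq_right)
    qed
    have eq: "q' t = exp (K * t) * Psi t * (K - kp * ((Psi t + r) / ((Psi t + 1) * (V t + l))))"
      unfolding q'_def by (simp add: field_simps)
    show "q' t \<ge> 0" unfolding eq using k P by simp
  qed simp
  then have "Psi 0 \<le> Psi t1 * exp (K * t1)" by (simp add: q_def)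
  with P0 t1 have "0 < Psi t1 * exp (K * t1)" by linarith
  then have "Psi t1 > 0" by (simp add: zero_less_mult_iff)
  with t1 show False by simp
qed



lemma frac_cancel_nonneg:
  fixes x y z :: real
  assumes "0 \<le> x" "0 < y" shows "0 \<le> x / (y * z) * z"
proof (cases "z = 0")
  case False
  then have "x / (y * z) * z = x / y" by simp
  then show ?thesis using assms by simp
qed simp

lemma ode_facts:
  assumes ok: "lpmf_constants_ok P"
    and sol: "lpmf_solution P m w Vmat Vcm Vcw Psi Vpol2"
  shows "\<forall>t\<ge>0. Psi t > 0 \<and> Vmat t \<ge> 0 \<and> Vp_f P Vmat Vcm Vcw Psi t > 0
      \<and> 0 \<le> Phi_f P Vmat Psi t \<and> Phi_f P Vmat Psi t \<le> 1"
proof -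
  note cc = ok[unfolded lpmf_constants_ok_def]
  note s = sol[unfolded lpmf_solution_def]
  have cc: "0 < lp P" "0 < lpol1 P" "0 < Psir P" "0 < Phis P" "0 < Psibar P" "0 < ld P" "0 < lm P" "0 < ln P" "0 < lc P"
    using cc by blast+
  have Ppos: "\<forall>t\<ge>0. Psi t > 0"
  proof (rule psi_pos[of Psi "lp P" "Psir P" Vpol2 "lpol1 P"])
    show "\<forall>t\<ge>0. (Psi has_real_derivative
          (- lp P * (Psi t / (Psi t + 1)) * ((Psi t + Psir P) / (Vpol2 t + lpol1 P)))) (at t within {0..})"
      using s by (elim conjE) assumption
    show "\<forall>t\<ge>0. (Vpol2 has_real_derivative (lp P * (Psi t / (Psi t + 1)))) (at t within {0..})"
      using s by (elim conjE) assumption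
  qed (use cc s in auto)
  define S where "S t = Vmat t + Vcm t + Vcw t" for t
  define A where "A t = lp P * Psi t / Vp_f P Vmat Vcm Vcw Psi t" for t
  have dS: "\<forall>t\<ge>0. (S has_real_derivative A t * (S t + lpol1 P)) (at t within {0..})"
  proof (intro allI impI)
    fix t :: real assume t: "t \<ge> 0"
    have "(S has_real_derivative
          (lp P * Psi t / Vp_f P Vmat Vcm Vcw Psi t * (Vmat t + lpol1 P)
           - Phi_f P Vmat Psi t * (lc P * ln P + ld P * Sigma_f P Psi m t
                                   + ld P * Sigma_f P Psi w t))
         + (lp P * Psi t / Vp_f P Vmat Vcm Vcw Psi t * Vcm t
           + Phi_f P Vmat Psi t * (lc P * ln P + ld P * Sigma_f P Psi m t)
           - lm P * Vcm t)
         + (lp P * Psi t / Vp_f P Vmat Vcm Vcw Psi t * Vcw t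
           + ld P * Phi_f P Vmat Psi t * Sigma_f P Psi w t
           + lm P * Vcm t)) (at t within {0..})"
      unfolding S_def[abs_def] using s t by (elim conjE) (intro DERIV_add; blast)
    then show "(S has_real_derivative A t * (S t + lpol1 P)) (at t within {0..})"
      by (rule DERIV_cong) (simp add: A_def S_def algebra_simps add_divide_distrib[symmetric])
  qed
  have Snn: "\<forall>t\<ge>0. S t \<ge> 0"
  proof (intro allI impI)
    fix t :: real assume t: "t \<ge> 0"
    have "S 0 \<le> S t"
    proof (rule mono_from_deriv[OF dS _ t])
      fix x :: real assume x: "0 < x" "x < t"
      have "Psi x > 0" using Ppos x by auto
      then have "lp P * Psi x \<ge> 0" "Psi x + 1 > 0" using cc by auto
      moreover have "A x * (S x + lpol1 P) = lp P * Psi x / ((Psi x + 1) * (S x + lpol1 P)) * (S x + lpol1 P)"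
        by (simp add: A_def Vp_f_def S_def add.assoc)
      ultimately show "A x * (S x + lpol1 P) \<ge> 0"
        using frac_cancel_nonneg[of "lp P * Psi x" "Psi x + 1" "S x + lpol1 P"] by simp
    qed simp
    then show "S t \<ge> 0" using s by (elim conjE) (simp add: S_def)
  qed
  have Vp: "\<forall>t\<ge>0. Vp_f P Vmat Vcm Vcw Psi t > 0"
  proof (intro allI impI)
    fix t :: real assume "t \<ge> 0"
    then have a: "Psi t > 0" "S t \<ge> 0" using Ppos Snn by blast+
    have "lpol1 P > 0" using cc by blast
    with a have "Psi t + 1 > 0" "S t + lpol1 P > 0" by linarith+
    moreover have "Vp_f P Vmat Vcm Vcw Psi t = (Psi t + 1) * (S t + lpol1 P)"
      by (simp add: Vp_f_def S_def)
    ultimately show "Vp_f P Vmat Vcm Vcw Psi t > 0" by simp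
  qed
  have dVm: "\<forall>t\<ge>0. (Vmat has_real_derivative
          (lp P * Psi t / Vp_f P Vmat Vcm Vcw Psi t * (Vmat t + lpol1 P)
           - Phi_f P Vmat Psi t * (lc P * ln P + ld P * Sigma_f P Psi m t
                                   + ld P * Sigma_f P Psi w t))) (at t within {0..})"
    using s by (elim conjE) assumption
  have Vmnn: "\<forall>t\<ge>0. Vmat t \<ge> 0"
  proof (rule stay_nonneg[OF dVm, of "lpol1 P"])
    show "0 < lpol1 P" using cc by auto
    show "0 \<le> Vmat 0" using s by (elim conjE) simp
    fix t :: real assume t: "0 < t" "- lpol1 P < Vmat t" "Vmat t < 0"
    have Pt: "Psi t > 0" using Ppos t(1) by simp
    then have P1: "Psi t + 1 > 0" by simp
    have "Vmat t / ((Psi t + 1) * (Vmat t + lpol1 P)) < 0"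
      using P1 t by (intro divide_neg_pos) auto
    then have Phi0: "Phi_f P Vmat Psi t = 0" unfolding Phi_f_def using cc by auto
    have "Vp_f P Vmat Vcm Vcw Psi t > 0" "Psi t > 0" "lp P > 0" using Vp Pt cc t(1) by auto
    then have "lp P * Psi t / Vp_f P Vmat Vcm Vcw Psi t * (Vmat t + lpol1 P) \<ge> 0"
      using t by (intro mult_nonneg_nonneg divide_nonneg_pos) auto
    then show "0 \<le> lp P * Psi t / Vp_f P Vmat Vcm Vcw Psi t * (Vmat t + lpol1 P)
           - Phi_f P Vmat Psi t * (lc P * ln P + ld P * Sigma_f P Psi m t
                                   + ld P * Sigma_f P Psi w t)" by (simp add: Phi0)
  qed
  have Phi: "0 \<le> Phi_f P Vmat Psi t \<and> Phi_f P Vmat Psi t \<le> 1" if t: "t \<ge> 0" for t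
  proof -
    have P1: "Psi t + 1 \<ge> 1" using Ppos t by auto
    have V: "Vmat t \<ge> 0" using Vmnn t by auto
    have "Vmat t / ((Psi t + 1) * (Vmat t + lpol1 P)) \<le> 1"
    proof -
      have "Vmat t \<le> (Psi t + 1) * (Vmat t + lpol1 P)"
      proof -
        have "Vmat t \<le> 1 * (Vmat t + lpol1 P)" using cc by simp
        also have "\<dots> \<le> (Psi t + 1) * (Vmat t + lpol1 P)"
          using P1 V cc by (intro mult_right_mono) auto
        finally show ?thesis .
      qed
      moreover have "(Psi t + 1) * (Vmat t + lpol1 P) > 0" using P1 V cc by simp
      ultimately show ?thesis by simp
    qed
    then show ?thesis unfolding Phi_f_def using cc by auto
  qed
  show ?thesis using Ppos Vmnn Vp Phi by auto
qed



lemma cut_cont: "continuous_on UNIV (cut R)"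
  using cut_deriv by (meson DERIV_continuous continuous_at_imp_continuous_on)

lemma cut_meas[measurable]: "cut R \<in> borel_measurable borel"
  by (rule borel_measurable_continuous_onI[OF cut_cont])

lemma alpha_nonneg: "0 < la P \<Longrightarrow> 0 \<le> alpha_f P Psi v u t"
  unfolding alpha_f_def by (intro mult_nonneg_nonneg add_nonneg_nonneg) auto

lemma coag_nonpos:
  assumes la: "0 < la P" and adm: "admissible_density P Psi y" and t: "0 \<le> t" and R: "0 < R"
  shows "coag_weak P Psi y (cut R) t \<le> 0"
proof -
  let ?M = "lborel \<Otimes>\<^sub>M lborel :: (real \<times> real) measure"
  let ?A = "{0<..} \<times> {0<..} :: (real \<times> real) set"
  let ?B = "{0<..R+1} \<times> {0<..} :: (real \<times> real) set"
  define F where "F = (\<lambda>(v,u). alpha_f P Psi v u t * y v t * y u t)"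
  have "set_integrable ?M ?B F"
    using adm t R unfolding admissible_density_def F_def by auto
  then have hint: "integrable ?M (\<lambda>x. indicator ?B x * F x)"
    unfolding set_integrable_def by simp
  define f where "f = (\<lambda>x. indicator ?A x *\<^sub>R (\<lambda>(v,u). alpha_f P Psi v u t * y v t * y u t * cut R v) x)"
  define g where "g = (\<lambda>x. indicator ?A x *\<^sub>R (\<lambda>(v,u). alpha_f P Psi v u t * y v t * y u t * cut R (v + u)) x)"
  have coag: "coag_weak P Psi y (cut R) t = - integral\<^sup>L ?M f + 1/2 * integral\<^sup>L ?M g"
    unfolding coag_weak_def set_lebesgue_integral_def f_def g_def by simp
  have ynn: "0 \<le> y v t" if "0 \<le> v" for v
    using adm t that unfolding admissible_density_def by auto
  have Fnn: "0 \<le> F (v,u)" if "0 < v" "0 < u" for v u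
    unfolding F_def using alpha_nonneg[OF la] ynn that by simp
  have feq: "f x = indicator ?B x * F x * cut R (fst x)" for x
  proof (cases x)
    case (Pair v u)
    show ?thesis
    proof (cases "0 < v \<and> 0 < u")
      case True
      show ?thesis
      proof (cases "v \<le> R + 1")
        case False
        then have "cut R v = 0" by (intro cut_zero) simp
        then show ?thesis using Pair True False by (simp add: f_def)
      qed (use Pair True in \<open>simp add: f_def F_def indicator_def\<close>)
    qed (use Pair in \<open>auto simp: f_def indicator_def\<close>)
  qed
  have geq: "g x = indicator ?B x * F x * cut R (fst x + snd x)" for x
  proof (cases x)
    case (Pair v u)
    show ?thesis
    proof (cases "0 < v \<and> 0 < u")
      case True
      show ?thesis
      proof (cases "v \<le> R + 1")
        case False
        then have "cut R (v+u) = 0" using True by (intro cut_zero) simp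
        then show ?thesis using Pair True False by (simp add: g_def)
      qed (use Pair True in \<open>simp add: g_def F_def indicator_def\<close>)
    qed (use Pair in \<open>auto simp: g_def indicator_def\<close>)
  qed
  have hmeas: "(\<lambda>x. indicator ?B x * F x) \<in> borel_measurable ?M"
    using hint by (rule borel_measurable_integrable)
  have fmeas: "f \<in> borel_measurable ?M"
    unfolding feq[abs_def] using hmeas by measurable
  have fint: "integrable ?M f"
  proof (rule Bochner_Integration.integrable_bound[OF hint fmeas], rule AE_I2)
    fix x :: "real \<times> real"
    have "0 \<le> cut R (fst x)" "cut R (fst x) \<le> 1" by (rule cut_ge0, rule cut_le1)
    then have "\<bar>indicator ?B x * F x * cut R (fst x)\<bar> \<le> \<bar>indicator ?B x * F x\<bar>"
      by (simp add: abs_mult mult_left_le)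
    then show "norm (f x) \<le> norm (indicator ?B x * F x)" by (simp add: feq)
  qed
  have gf: "g x \<le> f x" for x
  proof (cases x)
    case (Pair v u)
    show ?thesis
    proof (cases "0 < v \<and> 0 < u")
      case True
      have "cut R (v + u) \<le> cut R v" using True by (intro cut_antimono) simp
      moreover have "0 \<le> F (v,u)" using Fnn True by simp
      ultimately show ?thesis using Pair True
        by (simp add: f_def g_def F_def mult_left_mono)
    qed (use Pair in \<open>auto simp: f_def g_def indicator_def\<close>)
  qed
  have fnn: "0 \<le> f x" for x
  proof (cases x)
    case (Pair v u)
    show ?thesis
    proof (cases "0 < v \<and> 0 < u")
      case True
      have "0 \<le> cut R v" by (rule cut_ge0)
      moreover have "0 \<le> F (v,u)" using Fnn True by simp
      ultimately show ?thesis using Pair True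
        by (simp add: f_def F_def)
    qed (use Pair in \<open>auto simp: f_def indicator_def\<close>)
  qed
  have "integral\<^sup>L ?M g \<le> integral\<^sup>L ?M f"
    by (rule integral_mono'[OF fint]) (auto intro: gf fnn)
  moreover have "0 \<le> integral\<^sup>L ?M f"
    by (rule integral_nonneg_AE) (auto intro: fnn)
  ultimately show ?thesis unfolding coag by simp
qed


lemma set_int_nonneg:
  fixes h :: "real \<Rightarrow> real"
  assumes "\<And>v. 0 < v \<Longrightarrow> 0 \<le> h v"
  shows "0 \<le> set_lebesgue_integral lborel {0<..} h"
  unfolding set_lebesgue_integral_def
proof (rule integral_nonneg_AE, rule AE_I2)
  fix x :: real
  show "0 \<le> indicator {0<..} x *\<^sub>R h x"
  proof (cases "0 < x")
    case True then show ?thesis using assms[OF True] by simp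
  qed simp
qed

lemma set_int_nonpos:
  fixes h :: "real \<Rightarrow> real"
  assumes "\<And>v. 0 < v \<Longrightarrow> h v \<le> 0"
  shows "set_lebesgue_integral lborel {0<..} h \<le> 0"
proof -
  have "0 \<le> set_lebesgue_integral lborel {0<..} (\<lambda>v. - h v)"
  proof (rule set_int_nonneg)
    fix v :: real assume "0 < v" then show "0 \<le> - h v" using assms[of v] by simp
  qed
  moreover have "set_lebesgue_integral lborel {0<..} (\<lambda>v. - h v) = - set_lebesgue_integral lborel {0<..} h"
    unfolding set_lebesgue_integral_def by simp
  ultimately show ?thesis by simp
qed

lemma g_nonneg:
  assumes ok: "lpmf_constants_ok P" and "Psi t > 0" "Vp_f P Vmat Vcm Vcw Psi t > 0"
    "0 \<le> Phi_f P Vmat Psi t" "0 < v"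
  shows "0 \<le> g_f P Vmat Vcm Vcw Psi v t"
proof -
  have c: "0 < ld P" "0 < lp P" using ok unfolding lpmf_constants_ok_def by blast+
  have a: "0 \<le> ld P * Phi_f P Vmat Psi t * (Psi t + 1) powr (2/3) * v powr pb P"
    using c assms(4) by (intro mult_nonneg_nonneg) simp_all
  have b: "0 \<le> lp P * Psi t / Vp_f P Vmat Vcm Vcw Psi t * v"
    using c assms(2,3,5) by (intro mult_nonneg_nonneg divide_nonneg_pos) simp_all
  show ?thesis unfolding g_f_def using a b by linarith
qed

lemma int_zero_init:
  assumes "admissible_density P Psi y"
  shows "set_lebesgue_integral lborel {0<..} (\<lambda>v. cut R v * y v 0) = 0"
proof -
  have z: "\<forall>v\<ge>0. y v 0 = 0" using assms unfolding admissible_density_def by blast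
  have "(\<lambda>v. indicator {0<..} v *\<^sub>R (cut R v * y v 0)) = (\<lambda>v. 0::real)"
  proof (rule ext)
    fix v :: real
    show "indicator {0<..} v *\<^sub>R (cut R v * y v 0) = 0"
    proof (cases "0 < v")
      case True then show ?thesis using z by simp
    qed simp
  qed
  then show ?thesis unfolding set_lebesgue_integral_def by simp
qed

lemma cut_bounds:
  assumes ok: "lpmf_constants_ok P" and sol: "lpmf_solution P m w Vmat Vcm Vcw Psi Vpol2"
    and R: "0 < R"
  shows "\<forall>t\<ge>0. set_lebesgue_integral lborel {0<..} (\<lambda>v. cut R v * m v t) \<le> ln P * t
          \<and> set_lebesgue_integral lborel {0<..} (\<lambda>v. cut R v * w v t) \<le> ln P * lm P / 2 * t\<^sup>2"
proof -
  have cc: "0 < la P" "0 < ln P" "0 < lm P"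
    using ok unfolding lpmf_constants_ok_def by blast+
  note s = sol[unfolded lpmf_solution_def]
  have admm: "admissible_density P Psi m" and admw: "admissible_density P Psi w"
    using s[THEN conjunct1] s[THEN conjunct2, THEN conjunct1] by simp_all
  have wm: "\<forall>\<phi>. test_fun \<phi> \<longrightarrow> (\<forall>t\<ge>0.
        ((\<lambda>s. set_lebesgue_integral lborel {0<..} (\<lambda>v. \<phi> v * m v s)) has_real_derivative
           (set_lebesgue_integral lborel {0<..}
               (\<lambda>v. g_f P Vmat Vcm Vcw Psi v t * deriv \<phi> v * m v t)
            + eta0_f P Vmat Psi t * \<phi> (lc P)
            - lm P * set_lebesgue_integral lborel {0<..} (\<lambda>v. \<phi> v * m v t)
            + coag_weak P Psi m \<phi> t)) (at t within {0..}))"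
    by (rule s[THEN conjunct2, THEN conjunct2, THEN conjunct1])
  have ww: "\<forall>\<phi>. test_fun \<phi> \<longrightarrow> (\<forall>t\<ge>0.
        ((\<lambda>s. set_lebesgue_integral lborel {0<..} (\<lambda>v. \<phi> v * w v s)) has_real_derivative
           (set_lebesgue_integral lborel {0<..}
               (\<lambda>v. g_f P Vmat Vcm Vcw Psi v t * deriv \<phi> v * w v t)
            + lm P * set_lebesgue_integral lborel {0<..} (\<lambda>v. \<phi> v * m v t)
            + coag_weak P Psi w \<phi> t)) (at t within {0..}))"
    by (rule s[THEN conjunct2, THEN conjunct2, THEN conjunct2, THEN conjunct1])
  note of = ode_facts[OF ok sol]
  define Fm where "Fm t = set_lebesgue_integral lborel {0<..} (\<lambda>v. cut R v * m v t)" for t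
  define Fw where "Fw t = set_lebesgue_integral lborel {0<..} (\<lambda>v. cut R v * w v t)" for t
  define Dm where "Dm t = set_lebesgue_integral lborel {0<..}
               (\<lambda>v. g_f P Vmat Vcm Vcw Psi v t * deriv (cut R) v * m v t)
            + eta0_f P Vmat Psi t * cut R (lc P)
            - lm P * Fm t + coag_weak P Psi m (cut R) t" for t
  define Dw where "Dw t = set_lebesgue_integral lborel {0<..}
               (\<lambda>v. g_f P Vmat Vcm Vcw Psi v t * deriv (cut R) v * w v t)
            + lm P * Fm t + coag_weak P Psi w (cut R) t" for t
  have dFm: "\<forall>t\<ge>0. (Fm has_real_derivative Dm t) (at t within {0..})"
  proof (intro allI impI)
    fix t :: real assume t: "0 \<le> t"
    show "(Fm has_real_derivative Dm t) (at t within {0..})"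
      unfolding Fm_def[abs_def] Dm_def Fm_def by (rule wm[rule_format, OF test_fun_cut t])
  qed
  have dFw: "\<forall>t\<ge>0. (Fw has_real_derivative Dw t) (at t within {0..})"
  proof (intro allI impI)
    fix t :: real assume t: "0 \<le> t"
    show "(Fw has_real_derivative Dw t) (at t within {0..})"
      unfolding Fw_def[abs_def] Dw_def Fm_def by (rule ww[rule_format, OF test_fun_cut t])
  qed
  have growth: "set_lebesgue_integral lborel {0<..}
               (\<lambda>v. g_f P Vmat Vcm Vcw Psi v t * deriv (cut R) v * y v t) \<le> 0"
    if t: "0 \<le> t" and adm: "admissible_density P Psi y" for t y
  proof (rule set_int_nonpos)
    fix v :: real assume v: "0 < v"
    have o: "Psi t > 0" "Vp_f P Vmat Vcm Vcw Psi t > 0" "0 \<le> Phi_f P Vmat Psi t"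
      using of t by blast+
    have "0 \<le> g_f P Vmat Vcm Vcw Psi v t" by (rule g_nonneg[OF ok o v])
    moreover have "0 \<le> y v t" using adm t v unfolding admissible_density_def by auto
    moreover have "deriv (cut R) v \<le> 0" unfolding deriv_cut by (rule dcut_nonpos)
    ultimately show "g_f P Vmat Vcm Vcw Psi v t * deriv (cut R) v * y v t \<le> 0"
      by (simp add: mult_nonneg_nonpos mult_nonpos_nonneg)
  qed
  have Fnn: "0 \<le> set_lebesgue_integral lborel {0<..} (\<lambda>v. cut R v * y v t)"
    if t: "0 \<le> t" and adm: "admissible_density P Psi y" for t y
  proof (rule set_int_nonneg)
    fix v :: real assume v: "0 < v"
    have "0 \<le> y v t" using adm t v unfolding admissible_density_def by auto
    then show "0 \<le> cut R v * y v t" using cut_ge0 by simp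
  qed
  have Dm_le: "Dm t \<le> ln P" if t: "0 \<le> t" for t
  proof -
    have "0 \<le> Phi_f P Vmat Psi t" "Phi_f P Vmat Psi t \<le> 1" using of t by blast+
    moreover have "0 \<le> cut R (lc P)" "cut R (lc P) \<le> 1" by (rule cut_ge0, rule cut_le1)
    ultimately have "Phi_f P Vmat Psi t * cut R (lc P) \<le> 1"
      by (simp add: mult_le_one)
    then have e: "eta0_f P Vmat Psi t * cut R (lc P) \<le> ln P"
      unfolding eta0_f_def using cc by (simp add: mult.assoc mult_left_le)
    have "0 \<le> lm P * Fm t" unfolding Fm_def using Fnn[OF t admm] cc by simp
    then show ?thesis unfolding Dm_def
      using e growth[OF t admm] coag_nonpos[OF cc(1) admm t R] by linarith
  qed
  have Fm_le: "Fm t \<le> ln P * t" if t: "0 \<le> t" for t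
  proof -
    have "\<forall>t\<ge>0. ((\<lambda>t. Fm t - ln P * t) has_real_derivative Dm t - ln P) (at t within {0..})"
      using dFm by (auto intro!: derivative_eq_intros)
    from antimono_from_deriv[OF this order_refl t] Dm_le
    have "Fm t - ln P * t \<le> Fm 0 - ln P * 0" by force
    moreover have "Fm 0 = 0" unfolding Fm_def by (rule int_zero_init[OF admm])
    ultimately show ?thesis by simp
  qed
  have Dw_le: "Dw t \<le> ln P * lm P * t" if t: "0 \<le> t" for t
  proof -
    have "lm P * Fm t \<le> lm P * (ln P * t)" using Fm_le[OF t] cc by simp
    then show ?thesis unfolding Dw_def
      using growth[OF t admw] coag_nonpos[OF cc(1) admw t R] by (simp add: algebra_simps)
  qed
  have Fw_le: "Fw t \<le> ln P * lm P / 2 * t\<^sup>2" if t: "0 \<le> t" for t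
  proof -
    have "\<forall>t\<ge>0. ((\<lambda>t. Fw t - ln P * lm P / 2 * t\<^sup>2) has_real_derivative
        Dw t - ln P * lm P / 2 * (2 * t)) (at t within {0..})"
      using dFw by (auto intro!: derivative_eq_intros)
    then have "Fw t - ln P * lm P / 2 * t\<^sup>2 \<le> Fw 0 - ln P * lm P / 2 * 0\<^sup>2"
    proof (rule antimono_from_deriv[OF _ order_refl t])
      fix ta :: real assume "0 < ta" "ta < t"
      then have "Dw ta \<le> ln P * lm P * ta" by (intro Dw_le) simp
      then show "Dw ta - ln P * lm P / 2 * (2 * ta) \<le> 0" by simp
    qed
    moreover have "Fw 0 = 0" unfolding Fw_def by (rule int_zero_init[OF admw])
    ultimately show ?thesis by simp
  qed
  show ?thesis using Fm_le Fw_le unfolding Fm_def Fw_def by blast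
qed



lemma integrable_y:
  assumes adm: "admissible_density P Psi y" and b: "0 < pb P" and t: "0 \<le> t"
  shows "set_integrable lborel {0<..} (\<lambda>v. y v t)"
proof -
  have i1: "integrable lborel (\<lambda>v. indicator {0<..1} v * y v t)"
    using adm t unfolding admissible_density_def set_integrable_def by simp
  have i2: "integrable lborel (\<lambda>v. indicator {0<..} v * (v powr pb P * y v t))"
    using adm t unfolding admissible_density_def set_integrable_def by simp
  have ynn: "0 \<le> y v t" if "0 \<le> v" for v
    using adm t that unfolding admissible_density_def by auto
  have m1[measurable]: "(\<lambda>v. indicator {0<..1} v * y v t) \<in> borel_measurable lborel"
    using i1 by (rule borel_measurable_integrable)
  have m2[measurable]: "(\<lambda>v. indicator {0<..} v * (v powr pb P * y v t)) \<in> borel_measurable lborel"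
    using i2 by (rule borel_measurable_integrable)
  have eq: "indicator {0<..} v * y v t = indicator {0<..1} v * y v t
      + indicator {0<..} v * (v powr pb P * y v t) * (indicator {1<..} v * v powr (- pb P))" for v :: real
  proof (cases "1 < v")
    case True
    have "v powr pb P * v powr (- pb P) = 1" using True by (simp add: powr_add[symmetric])
    then have "v powr pb P * y v t * v powr (- pb P) = y v t"
      by (metis mult.commute mult.left_commute mult_1_right)
    then show ?thesis using True by (simp add: indicator_def)
  qed (auto simp: indicator_def)
  have meas: "(\<lambda>v. indicator {0<..} v * y v t) \<in> borel_measurable lborel"
    unfolding eq by measurable
  have "integrable lborel (\<lambda>v. indicator {0<..} v * y v t)"
  proof (rule Bochner_Integration.integrable_bound[OF Bochner_Integration.integrable_add[OF i1 i2] meas], rule AE_I2)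
    fix v :: real
    show "norm (indicator {0<..} v * y v t) \<le>
        norm (indicator {0<..1} v * y v t + indicator {0<..} v * (v powr pb P * y v t))"
    proof (cases "0 < v")
      case True
      have y0: "0 \<le> y v t" using ynn True by simp
      have "0 \<le> v powr pb P * y v t" using y0 by simp
      moreover have "y v t \<le> v powr pb P * y v t" if "1 < v"
      proof -
        have "1 \<le> v powr pb P" using that b by (intro ge_one_powr_ge_zero) auto
        then show ?thesis using y0 by (metis mult_le_cancel_right2 mult.commute mult_right_mono mult_1_left)
      qed
      ultimately show ?thesis using True y0 by (auto simp: indicator_def)
    qed simp
  qed
  then show ?thesis unfolding set_integrable_def by simp
qed

lemma limit_le:
  assumes adm: "admissible_density P Psi y" and t: "0 \<le> t"
    and int: "set_integrable lborel {0<..} (\<lambda>v. y v t)"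
    and le: "\<And>R. 0 < R \<Longrightarrow> set_lebesgue_integral lborel {0<..} (\<lambda>v. cut R v * y v t) \<le> C"
  shows "set_lebesgue_integral lborel {0<..} (\<lambda>v. y v t) \<le> C"
proof -
  define f where "f v = indicator {0<..} v * y v t" for v :: real
  define s where "s n v = indicator {0<..} v * (cut (real (Suc n)) v * y v t)" for n v
  have fi: "integrable lborel f" using int unfolding set_integrable_def f_def by simp
  have fm[measurable]: "f \<in> borel_measurable lborel" using fi by (rule borel_measurable_integrable)
  have seq: "s n v = f v * cut (real (Suc n)) v" for n v by (simp add: s_def f_def)
  have sm: "s n \<in> borel_measurable lborel" for n unfolding seq[abs_def] by measurable
  have lim: "(\<lambda>n. integral\<^sup>L lborel (s n)) \<longlonglongrightarrow> integral\<^sup>L lborel f"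
  proof (rule integral_dominated_convergence[OF fm sm integrable_norm[OF fi]])
    show "AE v in lborel. (\<lambda>n. s n v) \<longlonglongrightarrow> f v"
    proof (rule AE_I2, rule tendsto_eventually)
      fix v :: real
      show "\<forall>\<^sub>F n in sequentially. s n v = f v"
      proof (rule eventually_sequentiallyI[of "nat \<lceil>v\<rceil>"])
        fix n assume "nat \<lceil>v\<rceil> \<le> n"
        then have "v \<le> real (Suc n)" by linarith
        then show "s n v = f v" by (simp add: seq cut_one)
      qed
    qed
    fix n
    show "AE v in lborel. norm (s n v) \<le> norm (f v)"
    proof (rule AE_I2)
      fix v :: real
      have "0 \<le> cut (real (Suc n)) v" "cut (real (Suc n)) v \<le> 1" by (rule cut_ge0, rule cut_le1)
      then show "norm (s n v) \<le> norm (f v)" unfolding seq by (simp add: abs_mult mult_left_le)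
    qed
  qed
  have "integral\<^sup>L lborel f \<le> C"
  proof (rule LIMSEQ_le_const2[OF lim], intro exI allI impI)
    fix n :: nat
    have "set_lebesgue_integral lborel {0<..} (\<lambda>v. cut (real (Suc n)) v * y v t) \<le> C"
      by (rule le) simp
    then show "integral\<^sup>L lborel (s n) \<le> C" unfolding set_lebesgue_integral_def s_def by simp
  qed
  then show ?thesis unfolding set_lebesgue_integral_def f_def by simp
qed

theorem propositionC1:
  fixes P :: lpmf_params
    and m w :: "real \<Rightarrow> real \<Rightarrow> real"
    and Vmat Vcm Vcw Psi Vpol2 :: "real \<Rightarrow> real"
  assumes "lpmf_constants_ok P"
    and "lpmf_solution P m w Vmat Vcm Vcw Psi Vpol2"
  shows "\<forall>t\<ge>0.
           set_integrable lborel {0<..} (\<lambda>v. m v t)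
         \<and> set_integrable lborel {0<..} (\<lambda>v. w v t)
         \<and> set_lebesgue_integral lborel {0<..} (\<lambda>v. m v t) \<le> ln P * t
         \<and> set_lebesgue_integral lborel {0<..} (\<lambda>v. w v t) \<le> ln P * lm P / 2 * t\<^sup>2"
proof (intro allI impI)
  fix t :: real assume t: "0 \<le> t"
  note s = assms(2)[unfolded lpmf_solution_def]
  have admm: "admissible_density P Psi m" and admw: "admissible_density P Psi w"
    using s[THEN conjunct1] s[THEN conjunct2, THEN conjunct1] by simp_all
  have b: "0 < pb P" using assms(1) unfolding lpmf_constants_ok_def by blast
  have im: "set_integrable lborel {0<..} (\<lambda>v. m v t)" by (rule integrable_y[OF admm b t])
  have iw: "set_integrable lborel {0<..} (\<lambda>v. w v t)" by (rule integrable_y[OF admw b t])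
  note cb = cut_bounds[OF assms]
  have lm: "set_lebesgue_integral lborel {0<..} (\<lambda>v. m v t) \<le> ln P * t"
    by (rule limit_le[OF admm t im]) (use cb t in blast)
  have lw: "set_lebesgue_integral lborel {0<..} (\<lambda>v. w v t) \<le> ln P * lm P / 2 * t\<^sup>2"
    by (rule limit_le[OF admw t iw]) (use cb t in blast)
  show "set_integrable lborel {0<..} (\<lambda>v. m v t)
         \<and> set_integrable lborel {0<..} (\<lambda>v. w v t)
         \<and> set_lebesgue_integral lborel {0<..} (\<lambda>v. m v t) \<le> ln P * t
         \<and> set_lebesgue_integral lborel {0<..} (\<lambda>v. w v t) \<le> ln P * lm P / 2 * t\<^sup>2"
    using im iw lm lw by blast
qed


end
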